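(* Let $c<d$ be positive integers with $d\geq 4$, and let $X_{c,d}\subset\mathbb{P}^5$ be the threefold defined by $$x_0^c+x_1^c+x_2^c=x_3^c+x_4^c+x_5^c,\qquad x_0^d+x_1^d+x_2^d=x_3^d+x_4^d+x_5^d.$$ If $\Pi\subset X_{c,d}$ is a plane containing a rational point $[x_0,\dots,x_5]\in\mathbb{P}^5(\mathbb{Q})$ whose coordinates $x_0,\dots,x_5$ are all non-zero and of the same sign, then $\Pi$ is one of the six trivial planes $$x_0=x_i,\quad x_1=x_j,\quad x_2=x_k,$$ where $(i,j,k)$ is a permutation of $(3,4,5)$. *)

theory Defs
  imports "HOL-Analysis.Analysis"
begin

text \<open>Points of projective 5-space over the complex numbers are represented by
nonzero vectors in complex^6 (coordinates x_0..x_5 = v$0..v$5).  A projective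
plane is represented by its affine cone, a 3-dimensional complex linear subspace
of complex^6, i.e. the complex span of three complex-linearly independent vectors.\<close>

definition cspan3 :: "complex^6 \<Rightarrow> complex^6 \<Rightarrow> complex^6 \<Rightarrow> (complex^6) set" where
  "cspan3 u v w = {(\<chi> i. a * u$i + b * v$i + c * w$i) | a b c. True}"

definition cindep3 :: "complex^6 \<Rightarrow> complex^6 \<Rightarrow> complex^6 \<Rightarrow> bool" where
  "cindep3 u v w \<longleftrightarrow> (\<forall>a b c. (\<forall>i. a * u$i + b * v$i + c * w$i = 0) \<longrightarrow> a = 0 \<and> b = 0 \<and> c = 0)"

definition is_plane :: "(complex^6) set \<Rightarrow> bool" where
  "is_plane P \<longleftrightarrow> (\<exists>u v w. cindep3 u v w \<and> P = cspan3 u v w)"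

text \<open>The threefold X_{c,d}: membership of the cone (the equations are homogeneous).\<close>
definition in_X :: "nat \<Rightarrow> nat \<Rightarrow> complex^6 \<Rightarrow> bool" where
  "in_X c d x \<longleftrightarrow>
     x$0 ^ c + x$1 ^ c + x$2 ^ c = x$3 ^ c + x$4 ^ c + x$5 ^ c \<and>
     x$0 ^ d + x$1 ^ d + x$2 ^ d = x$3 ^ d + x$4 ^ d + x$5 ^ d"

end

theory Submission
  imports Defs "HOL-Computational_Algebra.Polynomial"
begin

lemma exhaust_6:
  fixes x :: 6
  shows "x = 0 \<or> x = 1 \<or> x = 2 \<or> x = 3 \<or> x = 4 \<or> x = 5"
proof (induct x)
  case (of_int z)
  then have "z = 0 \<or> z = 1 \<or> z = 2 \<or> z = 3 \<or> z = 4 \<or> z = 5" by fastforce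
  then show ?case by auto
qed
lemma UNIV_6: "(UNIV::6 set) = {0,1,2,3,4,5}"
  using exhaust_6 by auto
lemma sum_6: "sum f (UNIV::6 set) = f 0 + f 1 + f 2 + f 3 + f 4 + f 5"
  unfolding UNIV_6 by (simp add: ac_simps)

lemma poly_altdef_le:
  fixes p :: "'a::comm_semiring_1 poly"
  assumes "degree p \<le> n"
  shows "poly p x = (\<Sum>i\<le>n. coeff p i * x ^ i)"
proof -
  have "poly p x = (\<Sum>i\<le>degree p. coeff p i * x ^ i)" by (rule poly_altdef)
  also have "\<dots> = (\<Sum>i\<le>n. coeff p i * x ^ i)"
    using assms by (intro sum.mono_neutral_left) (auto simp: not_le coeff_eq_0)
  finally show ?thesis .
qed

lemma balance:
  fixes W r :: "'i \<Rightarrow> complex"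
  assumes fin: "finite S" and mom: "\<forall>k\<le>d. (\<Sum>a\<in>S. W a * r a ^ k) = 0"
    and card: "card (r ` S) \<le> Suc d"
  shows "(\<Sum>a\<in>S. if r a = z then W a else 0) = 0"
proof (cases "z \<in> r ` S")
  case False
  then have "\<forall>a\<in>S. r a \<noteq> z" by auto
  then show ?thesis by simp
next
  case True
  define Y where "Y = r ` S - {z}"
  define g where "g = (\<Prod>y\<in>Y. [:-y, 1:])"
  have finY: "finite Y" using fin Y_def by auto
  have "card Y = card (r ` S) - 1" using True fin unfolding Y_def by (simp add: card_Diff_singleton)
  then have cY: "card Y \<le> d" using card by linarith
  have "degree g \<le> sum (degree \<circ> (\<lambda>y. [:-y, 1::complex:])) Y"
    unfolding g_def by (rule degree_prod_sum_le[OF finY])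
  also have "\<dots> = card Y" by simp
  finally have dg: "degree g \<le> d" using cY by linarith
  have pg: "poly g x = (\<Prod>y\<in>Y. x - y)" for x
    unfolding g_def by (simp add: poly_prod)
  have gz: "poly g z \<noteq> 0"
    unfolding pg using finY Y_def by auto
  have ga: "W a * poly g (r a) = (if r a = z then W a else 0) * poly g z" if "a \<in> S" for a
  proof (cases "r a = z")
    case True then show ?thesis by simp
  next
    case False
    then have "r a \<in> Y" using that Y_def by auto
    then have "poly g (r a) = 0" unfolding pg using finY by (auto intro: prod_zero)
    then show ?thesis using False by simp
  qed
  have "(\<Sum>a\<in>S. W a * poly g (r a)) = (\<Sum>a\<in>S. W a * (\<Sum>i\<le>d. coeff g i * r a ^ i))"
    using poly_altdef_le[OF dg] by simp
  also have "\<dots> = (\<Sum>i\<le>d. coeff g i * (\<Sum>a\<in>S. W a * r a ^ i))"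
    by (simp add: sum_distrib_left sum_distrib_right mult_ac sum.swap[of _ S])
  also have "\<dots> = 0" using mom by simp
  finally have "(\<Sum>a\<in>S. (if r a = z then W a else 0) * poly g z) = 0"
    using ga by (metis (no_types, lifting) sum.cong)
  then have "(\<Sum>a\<in>S. (if r a = z then W a else 0)) * poly g z = 0"
    by (simp add: sum_distrib_right)
  then show ?thesis using gz by simp
qed

lemma moments:
  fixes Q x e :: "'i \<Rightarrow> complex"
  assumes "\<forall>s. (\<Sum>a\<in>S. e a * (Q a + s * x a)^d) = 0"
  shows "\<forall>k\<le>d. (\<Sum>a\<in>S. e a * Q a^(d-k) * x a^k) = 0"
proof -
  define c where "c k = of_nat (d choose k) * (\<Sum>a\<in>S. e a * Q a^(d-k) * x a^k)" for k
  have "(\<Sum>a\<in>S. e a * (Q a + s * x a)^d) = (\<Sum>k\<le>d. c k * s^k)" for s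
  proof -
    have "(\<Sum>a\<in>S. e a * (Q a + s * x a)^d) =
       (\<Sum>a\<in>S. e a * (\<Sum>k\<le>d. of_nat (d choose k) * (s * x a)^k * Q a^(d-k)))"
      by (subst add.commute) (simp add: binomial_ring)
    also have "\<dots> = (\<Sum>k\<le>d. c k * s^k)"
      unfolding c_def
      by (simp add: sum_distrib_left sum_distrib_right sum.swap[of _ S] power_mult_distrib mult_ac)
    finally show ?thesis .
  qed
  then have "\<forall>s. (\<Sum>k\<le>d. c k * s^k) = 0" using assms by simp
  then have "\<forall>k\<le>d. c k = 0" using polyfun_eq_0 by blast
  then show ?thesis unfolding c_def by simp
qed

lemma bal6:
  fixes P :: "(complex^6) set" and p :: "6 \<Rightarrow> real" and d :: nat and x :: "complex^6"
  assumes sub: "\<forall>x\<in>P. \<forall>y\<in>P. \<forall>a b. (\<chi> i. a*x$i + b*y$i) \<in> P"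
    and Xd: "\<forall>x\<in>P. x$0^d + x$1^d + x$2^d = x$3^d + x$4^d + x$5^d"
    and pos: "\<forall>a. p a > 0" and QP: "(\<chi> a. complex_of_real (p a)) \<in> P"
    and xP: "x \<in> P"
    and card: "card ((\<lambda>a. x$a / complex_of_real (p a)) ` UNIV) \<le> Suc d"
  shows "(if x$0 / p 0 = z then p 0 ^ d else 0) + (if x$1 / p 1 = z then p 1 ^ d else 0)
       + (if x$2 / p 2 = z then p 2 ^ d else 0)
       = (if x$3 / p 3 = z then p 3 ^ d else 0) + (if x$4 / p 4 = z then p 4 ^ d else 0)
       + (if x$5 / p 5 = z then p 5 ^ d else 0)"
proof -
  define Q :: "complex^6" where "Q = (\<chi> a. complex_of_real (p a))"
  define e :: "6 \<Rightarrow> complex" where "e a = (if a = 0 \<or> a = 1 \<or> a = 2 then 1 else -1)" for a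
  have e: "e 0 = 1" "e 1 = 1" "e 2 = 1" "e 3 = -1" "e 4 = -1" "e 5 = -1" by (simp_all add: e_def)
  have Qne: "Q$a \<noteq> 0" for a using pos unfolding Q_def by (simp add: less_imp_neq[symmetric]) 
  have "\<forall>s. (\<Sum>a\<in>UNIV. e a * (Q$a + s * x$a)^d) = 0"
  proof
    fix s
    have "(\<chi> i. 1 * Q$i + s * x$i) \<in> P" using sub QP xP unfolding Q_def by blast
    from Xd[rule_format, OF this] show "(\<Sum>a\<in>UNIV. e a * (Q$a + s * x$a)^d) = 0"
      by (simp add: sum_6 e)
  qed
  from moments[OF this] have m: "\<forall>k\<le>d. (\<Sum>a\<in>UNIV. e a * Q$a^(d-k) * x$a^k) = 0" .
  have "\<forall>k\<le>d. (\<Sum>a\<in>UNIV. (e a * Q$a^d) * (x$a / Q$a)^k) = 0"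
  proof (intro allI impI)
    fix k assume k: "k \<le> d"
    have eq: "e a * Q$a^(d-k) * x$a^k = (e a * Q$a^d) * (x$a / Q$a)^k" for a
    proof -
      have "Q$a^d = Q$a^(d-k) * Q$a^k" using k by (simp add: power_add[symmetric])
      then show ?thesis using Qne[of a] by (simp add: power_divide)
    qed
    show "(\<Sum>a\<in>UNIV. (e a * Q$a^d) * (x$a / Q$a)^k) = 0" unfolding eq[symmetric] using m k by simp
  qed
  from balance[OF _ this] card
  have "(\<Sum>a\<in>UNIV. if x$a / Q$a = z then e a * Q$a^d else 0) = 0" unfolding Q_def by simp
  define T where "T a = (if x$a / complex_of_real (p a) = z then p a ^ d else 0)" for a
  have t: "(if x$a / Q$a = z then e a * Q$a^d else 0) = e a * complex_of_real (T a)" for a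
    by (simp add: Q_def T_def)
  have "(\<Sum>a\<in>UNIV. e a * complex_of_real (T a)) = complex_of_real (T 0 + T 1 + T 2 - T 3 - T 4 - T 5)"
    by (simp add: sum_6 e)
  with \<open>(\<Sum>a\<in>UNIV. if x$a / Q$a = z then e a * Q$a^d else 0) = 0\<close>
  have "T 0 + T 1 + T 2 - T 3 - T 4 - T 5 = 0" unfolding t by (metis of_real_eq_0_iff)
  then show ?thesis unfolding T_def by simp
qed

lemma orph:
  fixes w0 w1 w2 w3 w4 w5 :: real
  assumes "w0 > 0" "w1 > 0" "w2 > 0" "w3 > 0" "w4 > 0" "w5 > 0"
    and "(if A0 then w0 else 0) + (if A1 then w1 else 0) + (if A2 then w2 else 0)
       = (if A3 then w3 else 0) + (if A4 then w4 else 0) + (if A5 then w5 else 0)"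
  shows "(A0 \<or> A1 \<or> A2) \<longleftrightarrow> (A3 \<or> A4 \<or> A5)"
  using assms by (cases A0; cases A1; cases A2; cases A3; cases A4; cases A5) simp_all

lemma card_img6: "card (f ` (UNIV::6 set)) \<le> 6"
proof -
  have "f ` UNIV = set [f 0, f 1, f 2, f 3, f 4, f 5]" by (simp add: UNIV_6)
  then show ?thesis using card_length[of "[f 0, f 1, f 2, f 3, f 4, f 5]"] by simp
qed

lemma card_img6_eq: "f 0 = f 1 \<Longrightarrow> card (f ` (UNIV::6 set)) \<le> 5"
proof -
  assume "f 0 = f 1"
  then have "f ` UNIV = set [f 1, f 2, f 3, f 4, f 5]" by (simp add: UNIV_6)
  then show ?thesis using card_length[of "[f 1, f 2, f 3, f 4, f 5]"] by simp
qed

lemma card_img6_eq2: "f 0 = f 2 \<Longrightarrow> card (f ` (UNIV::6 set)) \<le> 5"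
proof -
  assume "f 0 = f 2"
  then have "f ` UNIV = set [f 1, f 2, f 3, f 4, f 5]" by (auto simp add: UNIV_6)
  then show ?thesis using card_length[of "[f 1, f 2, f 3, f 4, f 5]"] by simp
qed

lemma comb_bool:
  fixes W0 W1 W2 W3 W4 W5 :: real
  assumes pos: "W0 > 0" "W1 > 0" "W2 > 0" "W3 > 0" "W4 > 0" "W5 > 0"
  and E1: "W2 = (if A3 then W3 else 0) + (if A4 then W4 else 0) + (if A5 then W5 else 0)"
  and E2: "W0 = (if A3 = B3 then W3 else 0) + (if A4 = B4 then W4 else 0) + (if A5 = B5 then W5 else 0)"
  and E3: "W1 = (if \<not>A3 \<and> B3 then W3 else 0) + (if \<not>A4 \<and> B4 then W4 else 0) + (if \<not>A5 \<and> B5 then W5 else 0)"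
  and E4: "W2 = (if A3 \<and> \<not>B3 then W3 else 0) + (if A4 \<and> \<not>B4 then W4 else 0) + (if A5 \<and> \<not>B5 then W5 else 0)"
  shows "(\<not>A3 \<and> \<not>B3 \<and> W0=W3 \<and> \<not>A4 \<and> B4 \<and> W1=W4 \<and> A5 \<and> \<not>B5 \<and> W2=W5) \<or>
         (\<not>A3 \<and> \<not>B3 \<and> W0=W3 \<and> \<not>A5 \<and> B5 \<and> W1=W5 \<and> A4 \<and> \<not>B4 \<and> W2=W4) \<or>
         (\<not>A4 \<and> \<not>B4 \<and> W0=W4 \<and> \<not>A3 \<and> B3 \<and> W1=W3 \<and> A5 \<and> \<not>B5 \<and> W2=W5) \<or>
         (\<not>A4 \<and> \<not>B4 \<and> W0=W4 \<and> \<not>A5 \<and> B5 \<and> W1=W5 \<and> A3 \<and> \<not>B3 \<and> W2=W3) \<or>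
         (\<not>A5 \<and> \<not>B5 \<and> W0=W5 \<and> \<not>A3 \<and> B3 \<and> W1=W3 \<and> A4 \<and> \<not>B4 \<and> W2=W4) \<or>
         (\<not>A5 \<and> \<not>B5 \<and> W0=W5 \<and> \<not>A4 \<and> B4 \<and> W1=W4 \<and> A3 \<and> \<not>B3 \<and> W2=W3)"
  using pos E1 E2 E3 E4
  by (cases A3; cases A4; cases A5; cases B3; cases B4; cases B5) simp_all

lemma comb:
  fixes a3 a4 a5 b3 b4 b5 :: complex and W0 W1 W2 W3 W4 W5 :: real
  assumes ab: "a3 \<in> {0,1}" "a4 \<in> {0,1}" "a5 \<in> {0,1}" "b3 \<in> {0,1}" "b4 \<in> {0,1}" "b5 \<in> {0,1}"
  and pos: "W0 > 0" "W1 > 0" "W2 > 0" "W3 > 0" "W4 > 0" "W5 > 0"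
  and E1: "W2 = (if a3 = 1 then W3 else 0) + (if a4 = 1 then W4 else 0) + (if a5 = 1 then W5 else 0)"
  and E2: "W0 = (if a3 - b3 = 0 then W3 else 0) + (if a4 - b4 = 0 then W4 else 0) + (if a5 - b5 = 0 then W5 else 0)"
  and E3: "W1 = (if a3 - b3 = -1 then W3 else 0) + (if a4 - b4 = -1 then W4 else 0) + (if a5 - b5 = -1 then W5 else 0)"
  and E4: "W2 = (if a3 - b3 = 1 then W3 else 0) + (if a4 - b4 = 1 then W4 else 0) + (if a5 - b5 = 1 then W5 else 0)"
  shows "(a3=0 \<and> b3=0 \<and> W0=W3 \<and> a4=0 \<and> b4=1 \<and> W1=W4 \<and> a5=1 \<and> b5=0 \<and> W2=W5) \<or>
         (a3=0 \<and> b3=0 \<and> W0=W3 \<and> a5=0 \<and> b5=1 \<and> W1=W5 \<and> a4=1 \<and> b4=0 \<and> W2=W4) \<or>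
         (a4=0 \<and> b4=0 \<and> W0=W4 \<and> a3=0 \<and> b3=1 \<and> W1=W3 \<and> a5=1 \<and> b5=0 \<and> W2=W5) \<or>
         (a4=0 \<and> b4=0 \<and> W0=W4 \<and> a5=0 \<and> b5=1 \<and> W1=W5 \<and> a3=1 \<and> b3=0 \<and> W2=W3) \<or>
         (a5=0 \<and> b5=0 \<and> W0=W5 \<and> a3=0 \<and> b3=1 \<and> W1=W3 \<and> a4=1 \<and> b4=0 \<and> W2=W4) \<or>
         (a5=0 \<and> b5=0 \<and> W0=W5 \<and> a4=0 \<and> b4=1 \<and> W1=W4 \<and> a3=1 \<and> b3=0 \<and> W2=W3)"
proof -
  have z: "x = 0 \<longleftrightarrow> \<not> x = 1" if "x \<in> {0,1::complex}" for x using that by auto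
  have d0: "x - y = 0 \<longleftrightarrow> (x = 1) = (y = 1)" if "x \<in> {0,1::complex}" "y \<in> {0,1::complex}" for x y
    using that by auto
  have dm: "x - y = -1 \<longleftrightarrow> \<not> x = 1 \<and> y = 1" if "x \<in> {0,1::complex}" "y \<in> {0,1::complex}" for x y
    using that by auto
  have dp: "x - y = 1 \<longleftrightarrow> x = 1 \<and> \<not> y = 1" if "x \<in> {0,1::complex}" "y \<in> {0,1::complex}" for x y
    using that by auto
  note C = comb_bool[OF pos E1 E2[unfolded d0[OF ab(1) ab(4)] d0[OF ab(2) ab(5)] d0[OF ab(3) ab(6)]]
     E3[unfolded dm[OF ab(1) ab(4)] dm[OF ab(2) ab(5)] dm[OF ab(3) ab(6)]]
     E4[unfolded dp[OF ab(1) ab(4)] dp[OF ab(2) ab(5)] dp[OF ab(3) ab(6)]]]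
  show ?thesis
    unfolding z[OF ab(1)] z[OF ab(2)] z[OF ab(3)] z[OF ab(4)] z[OF ab(5)] z[OF ab(6)]
    by (rule C)
qed
lemma sys23:
  fixes a1 a2 a3 b1 b2 b3 :: complex
  shows "\<exists>x y z. (x \<noteq> 0 \<or> y \<noteq> 0 \<or> z \<noteq> 0) \<and> a1*x + a2*y + a3*z = 0 \<and> b1*x + b2*y + b3*z = 0"
proof -
  define c1 c2 c3 where "c1 = a2*b3 - a3*b2" and "c2 = a3*b1 - a1*b3" and "c3 = a1*b2 - a2*b1"
  show ?thesis
  proof (cases "c1 \<noteq> 0 \<or> c2 \<noteq> 0 \<or> c3 \<noteq> 0")
    case True
    have "a1*c1 + a2*c2 + a3*c3 = 0" "b1*c1 + b2*c2 + b3*c3 = 0"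
      unfolding c1_def c2_def c3_def by algebra+
    with True show ?thesis by blast
  next
    case False
    then have c: "a2*b3 - a3*b2 = 0" "a3*b1 - a1*b3 = 0" "a1*b2 - a2*b1 = 0"
      unfolding c1_def c2_def c3_def by auto
    show ?thesis
    proof (cases "a1 \<noteq> 0 \<or> a2 \<noteq> 0 \<or> a3 \<noteq> 0")
      case True
      then consider "a1 \<noteq> 0" | "a2 \<noteq> 0" | "a3 \<noteq> 0" by blast
      then show ?thesis
      proof cases
        case 1
        have "a1*a2 + a2*(-a1) + a3*0 = 0" using c by (simp add: algebra_simps)
        moreover have "b1*a2 + b2*(-a1) + b3*0 = 0" using c by (simp add: algebra_simps)
        ultimately show ?thesis using 1 by (metis neg_equal_0_iff_equal)
      next
        case 2
        have "a1*0 + a2*a3 + a3*(-a2) = 0" using c by (simp add: algebra_simps)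
        moreover have "b1*0 + b2*a3 + b3*(-a2) = 0" using c by (simp add: algebra_simps)
        ultimately show ?thesis using 2 by (metis neg_equal_0_iff_equal)
      next
        case 3
        have "a1*a3 + a2*0 + a3*(-a1) = 0" using c by (simp add: algebra_simps)
        moreover have "b1*a3 + b2*0 + b3*(-a1) = 0" using c by (simp add: algebra_simps)
        ultimately show ?thesis using 3 by blast
      qed
    next
      case False
      then have a: "a1 = 0" "a2 = 0" "a3 = 0" by auto
      show ?thesis
      proof (cases "b1 \<noteq> 0 \<or> b2 \<noteq> 0 \<or> b3 \<noteq> 0")
        case True
        then consider "b1 \<noteq> 0" | "b2 \<noteq> 0" | "b3 \<noteq> 0" by blast
        then show ?thesis
        proof cases
          case 1
          have "b1*b2 + b2*(-b1) + b3*0 = 0" by (simp add: algebra_simps)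
          with 1 a show ?thesis by (metis neg_equal_0_iff_equal mult_zero_left add_0)
        next
          case 2
          have "b1*0 + b2*b3 + b3*(-b2) = 0" by (simp add: algebra_simps)
          with 2 a show ?thesis by (metis neg_equal_0_iff_equal mult_zero_left add_0)
        next
          case 3
          have "b1*b3 + b2*0 + b3*(-b1) = 0" by (simp add: algebra_simps)
          with 3 a show ?thesis by (metis mult_zero_left add_0)
        qed
      next
        case False
        then show ?thesis using a by (metis mult_zero_left add_0 one_neq_zero)
      qed
    qed
  qed
qed

lemma rat_complex: "(of_rat r :: complex) = complex_of_real (of_rat r)"
  by (cases r) (simp add: of_rat_rat)

lemma key:
  fixes P :: "(complex^6) set" and p :: "6 \<Rightarrow> real" and d :: nat and v w :: "complex^6"
  assumes sub: "\<forall>x\<in>P. \<forall>y\<in>P. \<forall>a b. (\<chi> i. a*x$i + b*y$i) \<in> P"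
    and Xd: "\<forall>x\<in>P. x$0^d + x$1^d + x$2^d = x$3^d + x$4^d + x$5^d"
    and pos: "\<forall>a. p a > 0" and QP: "(\<chi> a. complex_of_real (p a)) \<in> P"
    and d4: "4 \<le> d"
    and vP: "v \<in> P" "v \<noteq> 0" "v$0 = 0" "v$1 = 0"
    and wP: "w \<in> P" "w \<noteq> 0" "w$0 = 0" "w$2 = 0"
  shows "\<exists>i j k :: 6. {i, j, k} = {3, 4, 5} \<and>
           P = {x. x$0 = x$i \<and> x$1 = x$j \<and> x$2 = x$k}"
proof -
  define Q :: "complex^6" where "Q = (\<chi> a. complex_of_real (p a))"
  have Qa: "Q$a = complex_of_real (p a)" for a unfolding Q_def by simp
  have QinP: "Q \<in> P" using QP unfolding Q_def .
  have pne: "complex_of_real (p a) \<noteq> 0" for a using pos by (metis of_real_eq_0_iff less_irrefl)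
  have pd: "p a ^ d > 0" for a using pos by simp
  have lin: "(\<chi> i. a*x$i + b*y$i) \<in> P" if "x \<in> P" "y \<in> P" for x y a b
    using sub that by blast
  have B: "(x$0 / p 0 = z \<or> x$1 / p 1 = z \<or> x$2 / p 2 = z) \<longleftrightarrow>
           (x$3 / p 3 = z \<or> x$4 / p 4 = z \<or> x$5 / p 5 = z)"
    if "x \<in> P" "card ((\<lambda>a. x$a / complex_of_real (p a)) ` UNIV) \<le> Suc d" for x z
    by (rule orph[OF pd pd pd pd pd pd bal6[OF sub Xd pos QP that]])
  have divz: "x / complex_of_real (p a) = 0 \<longleftrightarrow> x = 0" for x a using pne[of a] by simp
  have Z: "y = 0" if yP: "y \<in> P" and y0: "y$0 = 0" "y$1 = 0" "y$2 = 0" for y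
  proof -
    have c: "card ((\<lambda>a. y$a / complex_of_real (p a)) ` UNIV) \<le> Suc d"
    proof -
      have "card ((\<lambda>a. y$a / complex_of_real (p a)) ` UNIV) \<le> 5"
        by (rule card_img6_eq) (simp add: y0)
      then show ?thesis using d4 by linarith
    qed
    have yb: "y$b = 0" if "b = 3 \<or> b = 4 \<or> b = 5" for b
    proof -
      from B[OF yP c, of "y$b / p b"] that
      have "y$0 / p 0 = y$b / p b \<or> y$1 / p 1 = y$b / p b \<or> y$2 / p 2 = y$b / p b"
        by blast
      then have "y$b / p b = 0" using y0 by auto
      then show ?thesis using divz by blast
    qed
    have "y$a = 0$a" for a :: 6 using exhaust_6[of a] yb y0 by auto
    then show ?thesis by (simp add: vec_eq_iff)
  qed
  have v2: "v$2 \<noteq> 0" using Z[OF vP(1) vP(3) vP(4)] vP(2) by blast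
  have w1: "w$1 \<noteq> 0" using Z[OF wP(1) wP(3) _ wP(4)] wP(2) by blast
  define V where "V = (\<chi> i. (complex_of_real (p 2) / v$2) * v$i + 0 * Q$i)"
  have VP: "V \<in> P" unfolding V_def by (rule lin[OF vP(1) QinP])
  have V0: "V$0 = 0" "V$1 = 0" "V$2 = p 2" using v2 vP by (simp_all add: V_def)
  define W where "W = (\<chi> i. (complex_of_real (p 1) / w$1) * w$i + 0 * Q$i)"
  have WP: "W \<in> P" unfolding W_def by (rule lin[OF wP(1) QinP])
  have W0: "W$0 = 0" "W$2 = 0" "W$1 = p 1" using w1 wP by (simp_all add: W_def)
  have cV: "card ((\<lambda>a. V$a / complex_of_real (p a)) ` UNIV) \<le> Suc d"
  proof -
    have "card ((\<lambda>a. V$a / complex_of_real (p a)) ` UNIV) \<le> 5"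
      by (rule card_img6_eq) (simp add: V0)
    then show ?thesis using d4 by linarith
  qed
  have cW: "card ((\<lambda>a. W$a / complex_of_real (p a)) ` UNIV) \<le> Suc d"
  proof -
    have "card ((\<lambda>a. W$a / complex_of_real (p a)) ` UNIV) \<le> 5"
      by (rule card_img6_eq2) (simp add: W0)
    then show ?thesis using d4 by linarith
  qed
  have V1: "V$2 / p 2 = 1" using V0 pne[of 2] by simp
  have W1: "W$1 / p 1 = 1" using W0 pne[of 1] by simp
  have Vb: "V$b / p b \<in> {0, 1}" if "b = 3 \<or> b = 4 \<or> b = 5" for b
  proof -
    from B[OF VP cV, of "V$b / p b"] that
    have "V$0 / p 0 = V$b / p b \<or> V$1 / p 1 = V$b / p b \<or> V$2 / p 2 = V$b / p b"
      by blast
    then show ?thesis using V0 V1 by auto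
  qed
  have Wb: "W$b / p b \<in> {0, 1}" if "b = 3 \<or> b = 4 \<or> b = 5" for b
  proof -
    from B[OF WP cW, of "W$b / p b"] that
    have "W$0 / p 0 = W$b / p b \<or> W$1 / p 1 = W$b / p b \<or> W$2 / p 2 = W$b / p b"
      by blast
    then show ?thesis using W0 W1 by auto
  qed
  define X where "X = (\<chi> i. 1 * V$i + (-1) * W$i)"
  have XP: "X \<in> P" unfolding X_def by (rule lin[OF VP WP])
  have rX: "X$a / complex_of_real (p a) = V$a / p a - W$a / p a" for a
    by (simp add: X_def diff_divide_distrib)
  have cX: "card ((\<lambda>a. X$a / complex_of_real (p a)) ` UNIV) \<le> Suc d"
  proof -
    have sub3: "(\<lambda>a. X$a / complex_of_real (p a)) ` UNIV \<subseteq> {-1, 0, 1}"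
    proof
      fix y assume "y \<in> (\<lambda>a. X$a / complex_of_real (p a)) ` UNIV"
      then obtain a where ya: "y = V$a / p a - W$a / p a" using rX by auto
      show "y \<in> {-1, 0, 1}"
      proof (cases "a = 3 \<or> a = 4 \<or> a = 5")
        case True
        then show ?thesis using Vb[OF True] Wb[OF True] ya by auto
      next
        case False
        then have "a = 0 \<or> a = 1 \<or> a = 2" using exhaust_6[of a] by blast
        then show ?thesis using ya V0 W0 V1 W1 by auto
      qed
    qed
    have "card ((\<lambda>a. X$a / complex_of_real (p a)) ` UNIV) \<le> card {-1, 0, 1::complex}"
      by (rule card_mono[OF _ sub3]) simp
    also have "\<dots> \<le> 3" using card_length[of "[-1, 0, 1::complex]"] by simp
    finally show ?thesis using d4 by linarith
  qed
  have E1: "p 2 ^ d = (if V$3 / p 3 = 1 then p 3 ^ d else 0) + (if V$4 / p 4 = 1 then p 4 ^ d else 0)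
        + (if V$5 / p 5 = 1 then p 5 ^ d else 0)"
    using bal6[OF sub Xd pos QP VP cV, of 1] V0 V1 by simp
  have E2: "p 0 ^ d = (if V$3 / p 3 - W$3 / p 3 = 0 then p 3 ^ d else 0)
        + (if V$4 / p 4 - W$4 / p 4 = 0 then p 4 ^ d else 0)
        + (if V$5 / p 5 - W$5 / p 5 = 0 then p 5 ^ d else 0)"
    using bal6[OF sub Xd pos QP XP cX, of 0] V0 V1 W0 W1 unfolding rX by simp
  have E3: "p 1 ^ d = (if V$3 / p 3 - W$3 / p 3 = -1 then p 3 ^ d else 0)
        + (if V$4 / p 4 - W$4 / p 4 = -1 then p 4 ^ d else 0)
        + (if V$5 / p 5 - W$5 / p 5 = -1 then p 5 ^ d else 0)"
    using bal6[OF sub Xd pos QP XP cX, of "-1"] V0 V1 W0 W1 unfolding rX by simp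
  have E4: "p 2 ^ d = (if V$3 / p 3 - W$3 / p 3 = 1 then p 3 ^ d else 0)
        + (if V$4 / p 4 - W$4 / p 4 = 1 then p 4 ^ d else 0)
        + (if V$5 / p 5 - W$5 / p 5 = 1 then p 5 ^ d else 0)"
    using bal6[OF sub Xd pos QP XP cX, of 1] V0 V1 W0 W1 unfolding rX by simp
  have ab: "V$3 / p 3 \<in> {0,1}" "V$4 / p 4 \<in> {0,1}" "V$5 / p 5 \<in> {0,1}"
     "W$3 / p 3 \<in> {0,1}" "W$4 / p 4 \<in> {0,1}" "W$5 / p 5 \<in> {0,1}"
    using Vb[of 3] Vb[of 4] Vb[of 5] Wb[of 3] Wb[of 4] Wb[of 5] by simp_all
  note D = comb[OF ab pd pd pd pd pd pd E1 E2 E3 E4]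
  have F: "P = {x. x$0 = x$i \<and> x$1 = x$j \<and> x$2 = x$k}"
    if ijk: "{i,j,k} = {3,4,5}" and hi: "V$i / p i = 0" "W$i / p i = 0" "p 0 ^ d = p i ^ d"
      and hj: "V$j / p j = 0" "W$j / p j = 1" "p 1 ^ d = p j ^ d"
      and hk: "V$k / p k = 1" "W$k / p k = 0" "p 2 ^ d = p k ^ d" for i j k :: 6
  proof -
    have d0: "0 < d" using d4 by simp
    have nn: "0 \<le> p a" for a using pos less_imp_le by blast
    have pi: "p i = p 0" "p j = p 1" "p k = p 2"
      using power_eq_iff_eq_base[OF d0 nn nn] hi(3) hj(3) hk(3) by metis+
    have Vi: "V$i = 0" "W$i = 0" "V$j = 0" "W$j = p 1" "V$k = p 2" "W$k = 0"
      using hi hj hk pne[of i] pne[of j] pne[of k] pi by (simp_all add: divide_eq_eq)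
    have Qi: "Q$i = Q$0" "Q$j = Q$1" "Q$k = Q$2" using pi by (simp_all add: Qa)
    define l where "l x = x$0 / complex_of_real (p 0)" for x :: "complex^6"
    define m where "m x = x$2 / complex_of_real (p 2) - l x" for x :: "complex^6"
    define n where "n x = x$1 / complex_of_real (p 1) - l x" for x :: "complex^6"
    define z where "z x = (\<chi> a. l x * Q$a + m x * V$a + n x * W$a)" for x :: "complex^6"
    have zP: "z x \<in> P" for x :: "complex^6"
    proof -
      have "(\<chi> a. 1 * (\<chi> a. l x * Q$a + m x * V$a)$a + n x * W$a) \<in> P"
        by (rule lin[OF lin[OF QinP VP] WP])
      then show ?thesis unfolding z_def by simp
    qed
    have z012: "(z x)$0 = x$0" "(z x)$1 = x$1" "(z x)$2 = x$2" for x :: "complex^6"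
      using pne[of 0] pne[of 1] pne[of 2]
      by (simp_all add: z_def Qa V0 W0 l_def m_def n_def field_simps)
    have zijk: "(z x)$i = (z x)$0" "(z x)$j = (z x)$1" "(z x)$k = (z x)$2" for x :: "complex^6"
      by (simp_all add: z_def Vi Qi V0 W0)
    have idx: "a = 0 \<or> a = 1 \<or> a = 2 \<or> a = i \<or> a = j \<or> a = k" for a :: 6
    proof -
      have "a \<in> {0,1,2} \<or> a \<in> {3,4,5}" using exhaust_6[of a] by auto
      then show ?thesis using ijk by auto
    qed
    show ?thesis
    proof (intro equalityI subsetI)
      fix x assume xP: "x \<in> P"
      define y where "y = (\<chi> a. 1 * x$a + (-1) * (z x)$a)"
      have yP: "y \<in> P" unfolding y_def by (rule lin[OF xP zP])
      have "y = 0" by (rule Z[OF yP]) (simp_all add: y_def z012)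
      then have "x = z x" by (simp add: y_def vec_eq_iff)
      then show "x \<in> {x. x$0 = x$i \<and> x$1 = x$j \<and> x$2 = x$k}"
        using zijk[of x] by (metis (mono_tags, lifting) mem_Collect_eq)
    next
      fix x :: "complex^6" assume "x \<in> {x. x$0 = x$i \<and> x$1 = x$j \<and> x$2 = x$k}"
      then have xT: "x$0 = x$i" "x$1 = x$j" "x$2 = x$k" by auto
      have "x$a = (z x)$a" for a
        using idx[of a] xT z012[of x] zijk[of x] by auto
      then have "x = z x" by (simp add: vec_eq_iff)
      then show "x \<in> P" using zP by metis
    qed
  qed
  from D show ?thesis
    apply (elim disjE)
         apply (elim conjE, rule exI[of _ 3], rule exI[of _ 4], rule exI[of _ 5], rule conjI[OF _ F], (assumption | simp add: insert_commute)+)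
        apply (elim conjE, rule exI[of _ 3], rule exI[of _ 5], rule exI[of _ 4], rule conjI[OF _ F], (assumption | simp add: insert_commute)+)
       apply (elim conjE, rule exI[of _ 4], rule exI[of _ 3], rule exI[of _ 5], rule conjI[OF _ F], (assumption | simp add: insert_commute)+)
      apply (elim conjE, rule exI[of _ 4], rule exI[of _ 5], rule exI[of _ 3], rule conjI[OF _ F], (assumption | simp add: insert_commute)+)
     apply (elim conjE, rule exI[of _ 5], rule exI[of _ 3], rule exI[of _ 4], rule conjI[OF _ F], (assumption | simp add: insert_commute)+)
    apply (elim conjE, rule exI[of _ 5], rule exI[of _ 4], rule exI[of _ 3], rule conjI[OF _ F], (assumption | simp add: insert_commute)+)
    done
qed


theorem mainTheorem5:
  fixes c d :: nat and P :: "(complex^6) set" and q :: "rat^6"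
  assumes "0 < c" and "c < d" and "4 \<le> d"
    and "is_plane P"
    and "\<forall>x\<in>P. in_X c d x"
    and "(\<chi> i. of_rat (q$i)) \<in> P"
    and "(\<forall>i. 0 < q$i) \<or> (\<forall>i. q$i < 0)"
  shows "\<exists>i j k :: 6. {i, j, k} = {3, 4, 5} \<and>
           P = {x. x$0 = x$i \<and> x$1 = x$j \<and> x$2 = x$k}"
proof -
  from assms(4) obtain u1 u2 u3 where ind: "cindep3 u1 u2 u3" and Pdef: "P = cspan3 u1 u2 u3"
    unfolding is_plane_def by blast
  have sub: "\<forall>x\<in>P. \<forall>y\<in>P. \<forall>a b. (\<chi> i. a*x$i + b*y$i) \<in> P"
  proof (intro ballI allI)
    fix x y a b assume "x \<in> P" "y \<in> P"
    then obtain a1 b1 c1 a2 b2 c2 where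
      x: "x = (\<chi> i. a1 * u1$i + b1 * u2$i + c1 * u3$i)" and
      y: "y = (\<chi> i. a2 * u1$i + b2 * u2$i + c2 * u3$i)"
      unfolding Pdef cspan3_def by blast
    have "(\<chi> i. a*x$i + b*y$i) = (\<chi> i. (a*a1+b*a2) * u1$i + (a*b1+b*b2) * u2$i + (a*c1+b*c2) * u3$i)"
      unfolding x y by (simp add: vec_eq_iff algebra_simps)
    then show "(\<chi> i. a*x$i + b*y$i) \<in> P" unfolding Pdef cspan3_def by blast
  qed
  have Xd: "\<forall>x\<in>P. x$0^d + x$1^d + x$2^d = x$3^d + x$4^d + x$5^d"
    using assms(5) unfolding in_X_def by blast
  define p where "p a = \<bar>real_of_rat (q$a)\<bar>" for a
  have qne: "q$a \<noteq> 0" for a using assms(7) by (metis less_irrefl)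
  have pos: "\<forall>a. p a > 0" using qne unfolding p_def by simp
  define Q0 :: "complex^6" where "Q0 = (\<chi> i. of_rat (q$i))"
  have Q0P: "Q0 \<in> P" using assms(6) unfolding Q0_def .
  have QP: "(\<chi> a. complex_of_real (p a)) \<in> P"
    using assms(7)
  proof
    assume "\<forall>i. 0 < q$i"
    then have "(\<chi> a. complex_of_real (p a)) = Q0"
      unfolding p_def Q0_def by (simp add: vec_eq_iff rat_complex abs_of_pos)
    then show ?thesis using Q0P by simp
  next
    assume "\<forall>i. q$i < 0"
    then have "(\<chi> a. complex_of_real (p a)) = (\<chi> i. (-1) * Q0$i + 0 * Q0$i)"
      unfolding p_def Q0_def by (simp add: vec_eq_iff rat_complex abs_of_neg of_rat_minus)
    moreover have "(\<chi> i. (-1) * Q0$i + 0 * Q0$i) \<in> P" using sub Q0P by blast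
    ultimately show ?thesis by (simp only:)
  qed
  have nz: "(\<chi> i. x * u1$i + y * u2$i + z * u3$i) \<noteq> 0" if "x \<noteq> 0 \<or> y \<noteq> 0 \<or> z \<noteq> 0" for x y z
  proof
    assume eq0: "(\<chi> i. x * u1$i + y * u2$i + z * u3$i) = 0"
    have h: "x * u1$i + y * u2$i + z * u3$i = 0" for i
      using eq0 by (simp add: vec_eq_iff)
    from ind[unfolded cindep3_def, rule_format, OF h] that show False by simp
  qed
  have inP: "(\<chi> i. x * u1$i + y * u2$i + z * u3$i) \<in> P" for x y z
    unfolding Pdef cspan3_def by (intro CollectI exI[of _ x] exI[of _ y] exI[of _ z]) simp
  obtain x1 y1 z1 where s1: "x1 \<noteq> 0 \<or> y1 \<noteq> 0 \<or> z1 \<noteq> 0"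
    "u1$0 * x1 + u2$0 * y1 + u3$0 * z1 = 0" "u1$1 * x1 + u2$1 * y1 + u3$1 * z1 = 0"
    using sys23[of "u1$0" "u2$0" "u3$0" "u1$1" "u2$1" "u3$1"] by blast
  obtain x2 y2 z2 where s2: "x2 \<noteq> 0 \<or> y2 \<noteq> 0 \<or> z2 \<noteq> 0"
    "u1$0 * x2 + u2$0 * y2 + u3$0 * z2 = 0" "u1$2 * x2 + u2$2 * y2 + u3$2 * z2 = 0"
    using sys23[of "u1$0" "u2$0" "u3$0" "u1$2" "u2$2" "u3$2"] by blast
  show ?thesis
  proof (rule key[OF sub Xd pos QP assms(3)])
    show "(\<chi> i. x1 * u1$i + y1 * u2$i + z1 * u3$i) \<in> P" by (rule inP)
    show "(\<chi> i. x1 * u1$i + y1 * u2$i + z1 * u3$i) \<noteq> 0" by (rule nz[OF s1(1)])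
    show "(\<chi> i. x1 * u1$i + y1 * u2$i + z1 * u3$i) $ 0 = 0" using s1(2) by (simp add: mult_ac)
    show "(\<chi> i. x1 * u1$i + y1 * u2$i + z1 * u3$i) $ 1 = 0" using s1(3) by (simp add: mult_ac)
    show "(\<chi> i. x2 * u1$i + y2 * u2$i + z2 * u3$i) \<in> P" by (rule inP)
    show "(\<chi> i. x2 * u1$i + y2 * u2$i + z2 * u3$i) \<noteq> 0" by (rule nz[OF s2(1)])
    show "(\<chi> i. x2 * u1$i + y2 * u2$i + z2 * u3$i) $ 0 = 0" using s2(2) by (simp add: mult_ac)
    show "(\<chi> i. x2 * u1$i + y2 * u2$i + z2 * u3$i) $ 2 = 0" using s2(3) by (simp add: mult_ac)
  qed
qed

end
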